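(* For every integer $r\ge0$, $$D^r(\delta)(\tau)=\frac{1}{24^r}\left(-\tfrac32\right)^{\overline r}e\!\left(-\frac{x}{24}\right)\left(\frac{\pi y}{6}\right)^{\frac14-\frac r2}M_{\frac14-\frac r2,\frac34-\frac r2}\!\left(\frac{\pi y}{6}\right).$$
   Context: $\tau=x+iy\in\mathbb H$, $e(w)=e^{2\pi iw}$, $M_{\kappa,\mu}$ is the Whittaker $M$-function, $(x)^{\overline r}$ is the rising factorial, $\delta(\tau):=e(-\frac{x}{24})(\frac{\pi y}{6})^{1/4}M_{\frac14,\frac34}(\frac{\pi y}{6})$, and on smooth functions $D:=\frac{1}{2\pi i}\cdot\frac12\left(\frac{\partial}{\partial x}-i\frac{\partial}{\partial y}\right)$ (which equals $\frac{1}{2\pi i}\frac{d}{d\tau}$ on holomorphic functions). *)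

theory Defs
  imports "HOL-Analysis.Analysis"
begin

definition kummerM :: "real \<Rightarrow> real \<Rightarrow> real \<Rightarrow> real" where
  "kummerM a b z = (\<Sum>n. pochhammer a n / pochhammer b n * z ^ n / fact n)"

definition whittakerM :: "real \<Rightarrow> real \<Rightarrow> real \<Rightarrow> real" where
  "whittakerM \<kappa> \<mu> z = exp (- z / 2) * z powr (\<mu> + 1/2) * kummerM (\<mu> - \<kappa> + 1/2) (1 + 2 * \<mu>) z"

definition e :: "real \<Rightarrow> complex" where
  "e w = exp (2 * pi * \<i> * of_real w)"

definition delta :: "complex \<Rightarrow> complex" where
  "delta \<tau> = e (- Re \<tau> / 24) *
     of_real ((pi * Im \<tau> / 6) powr (1/4) * whittakerM (1/4) (3/4) (pi * Im \<tau> / 6))"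

definition dx :: "(complex \<Rightarrow> complex) \<Rightarrow> complex \<Rightarrow> complex" where
  "dx f \<tau> = vector_derivative (\<lambda>t::real. f (\<tau> + of_real t)) (at 0)"

definition dy :: "(complex \<Rightarrow> complex) \<Rightarrow> complex \<Rightarrow> complex" where
  "dy f \<tau> = vector_derivative (\<lambda>t::real. f (\<tau> + \<i> * of_real t)) (at 0)"

definition Dop :: "(complex \<Rightarrow> complex) \<Rightarrow> complex \<Rightarrow> complex" where
  "Dop f \<tau> = 1 / (2 * pi * \<i>) * (1/2) * (dx f \<tau> - \<i> * dy f \<tau>)"

end

theory Submission
  imports Defs
begin

definition cK :: "real \<Rightarrow> nat \<Rightarrow> real" where
  "cK b n = 1 / pochhammer b n"

definition Kf :: "real \<Rightarrow> real \<Rightarrow> real" where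
  "Kf b z = (\<Sum>n. cK b n * z ^ n)"

lemma poch_nz:
  assumes nz: "\<And>k::nat. b + real k \<noteq> 0"
  shows "pochhammer b n \<noteq> 0"
proof
  assume "pochhammer b n = 0"
  then obtain k where "b = - real k" by (auto simp: pochhammer_eq_0_iff)
  with nz[of k] show False by simp
qed

lemma cK_summable:
  assumes nz: "\<And>k::nat. b + real k \<noteq> 0"
  shows "summable (\<lambda>n. cK b n * y ^ n)"
proof (rule summable_ratio_test[where c = "1/2" and N = "nat (ceiling (2*\<bar>y\<bar> + \<bar>b\<bar> + 1))"])
  fix n assume n: "nat (ceiling (2*\<bar>y\<bar> + \<bar>b\<bar> + 1)) \<le> n"
  hence nb: "real n \<ge> 2*\<bar>y\<bar> + \<bar>b\<bar> + 1" by linarith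
  hence pos: "b + real n > 0" by linarith
  have pz: "pochhammer b n \<noteq> 0" by (rule poch_nz) fact
  have "cK b (Suc n) * y ^ Suc n = (y / (b + real n)) * (cK b n * y ^ n)"
    using pz pos by (simp add: cK_def pochhammer_rec' field_simps)
  hence "norm (cK b (Suc n) * y ^ Suc n) = (\<bar>y\<bar> / (b + real n)) * norm (cK b n * y ^ n)"
    using pos by (simp add: abs_mult)
  also have "\<dots> \<le> 1/2 * norm (cK b n * y ^ n)"
  proof (rule mult_right_mono)
    show "\<bar>y\<bar> / (b + real n) \<le> 1/2" using pos nb by (simp add: field_simps)
  qed simp
  finally show "norm (cK b (Suc n) * y ^ Suc n) \<le> 1/2 * norm (cK b n * y ^ n)" .
qed simp

lemma Kf_deriv:
  assumes nz: "\<And>k::nat. b + real k \<noteq> 0"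
  shows "(Kf b has_real_derivative (\<Sum>n. diffs (cK b) n * z^n)) (at z)"
  unfolding Kf_def[abs_def]
  by (rule termdiffs_strong_converges_everywhere) (rule cK_summable[OF nz])

lemma Kf_ident:
  assumes nz: "\<And>k::nat. a + real k \<noteq> 0"
  shows "a * Kf (a+1) Y + Y * (\<Sum>n. diffs (cK (a+1)) n * Y^n) = a * Kf a Y"
proof -
  have nz1: "\<And>k::nat. a + 1 + real k \<noteq> 0"
    using nz[of "Suc _"] by (simp add: add.assoc)
  define c where "c = cK (a+1)"
  have S1: "(\<lambda>n. c n * Y^n) sums Kf (a+1) Y"
    unfolding c_def Kf_def using cK_summable[OF nz1] by (simp add: summable_sums)
  have "summable (\<lambda>n. diffs c n * Y^n)"
    unfolding c_def by (rule termdiff_converges_all) (rule cK_summable[OF nz1])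
  hence S2: "(\<lambda>n. Y * (diffs c n * Y^n)) sums (Y * (\<Sum>n. diffs c n * Y^n))"
    by (intro sums_mult summable_sums)
  have "(\<lambda>n. Y * (diffs c n * Y^n)) = (\<lambda>n. (\<lambda>m. real m * c m * Y^m) (Suc n))"
    by (auto simp: diffs_def)
  with S2 have "(\<lambda>n. (\<lambda>m. real m * c m * Y^m) (Suc n)) sums (Y * (\<Sum>n. diffs c n * Y^n))"
    by simp
  from sums_Suc[OF this] have S3: "(\<lambda>m. real m * c m * Y^m) sums (Y * (\<Sum>n. diffs c n * Y^n))"
    by simp
  have S4: "(\<lambda>n. a * (c n * Y^n) + real n * c n * Y^n) sums (a * Kf (a+1) Y + Y * (\<Sum>n. diffs c n * Y^n))"
    by (intro sums_add sums_mult S1 S3)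
  have eq: "a * (c n * Y^n) + real n * c n * Y^n = a * (cK a n * Y^n)" for n
  proof -
    have p1: "pochhammer (a+1) n \<noteq> 0" by (rule poch_nz) fact
    have p0: "pochhammer a n \<noteq> 0" by (rule poch_nz) fact
    have an: "a + real n \<noteq> 0" using nz by simp
    have "a * pochhammer (a+1) n = (a + real n) * pochhammer a n"
      using pochhammer_rec[of a n] pochhammer_rec'[of a n] by simp
    thus ?thesis using p1 p0 an unfolding c_def cK_def
      by (simp add: field_simps) (metis (no_types, lifting) distrib_right mult.assoc mult.commute)
  qed
  have S5: "(\<lambda>n. a * (cK a n * Y^n)) sums (a * Kf a Y)"
    unfolding Kf_def using cK_summable[OF nz] by (intro sums_mult summable_sums)
  from S4 have "(\<lambda>n. a * (cK a n * Y^n)) sums (a * Kf (a+1) Y + Y * (\<Sum>n. diffs c n * Y^n))"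
    by (simp only: eq)
  from sums_unique2[OF this S5] show ?thesis unfolding c_def .
qed


definition hh :: "real \<Rightarrow> real \<Rightarrow> real" where
  "hh a Y = Y powr a * exp (- Y / 2) * Kf (a+1) Y"

lemma hh_deriv:
  assumes nz: "\<And>k::nat. a + real k \<noteq> 0" and Y: "Y > 0"
  shows "(hh a has_real_derivative (a * hh (a-1) Y - hh a Y / 2)) (at Y)"
proof -
  have nz1: "\<And>k::nat. a + 1 + real k \<noteq> 0"
    using nz[of "Suc _"] by (simp add: add.assoc)
  define D where "D = (\<Sum>n. diffs (cK (a+1)) n * Y^n)"
  have dK: "(Kf (a+1) has_real_derivative D) (at Y)" unfolding D_def by (rule Kf_deriv[OF nz1])
  have dE: "((\<lambda>Y. exp (- Y / 2)) has_real_derivative exp (- Y / 2) * (- 1/2)) (at Y)"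
    by (auto intro!: derivative_eq_intros)
  have dP: "((\<lambda>Y. Y powr a) has_real_derivative a * Y powr (a - 1)) (at Y)"
    by (rule has_real_derivative_powr[OF Y])
  have d: "(hh a has_real_derivative
     ((a * Y powr (a - 1) * exp (- Y / 2) + Y powr a * (exp (- Y / 2) * (- 1/2))) * Kf (a+1) Y
       + Y powr a * exp (- Y / 2) * D)) (at Y)"
    unfolding hh_def[abs_def] by (rule DERIV_cong[OF DERIV_mult[OF DERIV_mult[OF dP dE] dK]]) (simp add: algebra_simps)
  have P: "Y powr a = Y powr (a - 1) * Y"
    using Y by (simp add: powr_diff)
  have id: "a * Kf (a+1) Y + Y * D = a * Kf a Y" unfolding D_def by (rule Kf_ident[OF nz])
  have "(a * Y powr (a - 1) * exp (- Y / 2) + Y powr a * (exp (- Y / 2) * (- 1/2))) * Kf (a+1) Y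
       + Y powr a * exp (- Y / 2) * D
     = Y powr (a - 1) * exp (- Y / 2) * (a * Kf (a+1) Y + Y * D) - hh a Y / 2"
    unfolding hh_def P by (simp add: algebra_simps)
  also have "\<dots> = a * hh (a-1) Y - hh a Y / 2"
    unfolding id hh_def by simp
  finally show ?thesis using d by simp
qed


lemma e_vd:
  "((\<lambda>t. e (p + q*t)) has_vector_derivative (2*pi*\<i> * of_real q) * e (p + q*t0)) (at t0)"
proof -
  have inner: "((\<lambda>t. 2*pi*\<i> * of_real (p + q*t)) has_vector_derivative 2*pi*\<i> * of_real q) (at t0)"
    by (rule has_vector_derivative_mult_right, rule has_vector_derivative_of_real)
       (auto intro!: derivative_eq_intros)
  have "((exp \<circ> (\<lambda>t. 2*pi*\<i> * of_real (p + q*t))) has_vector_derivative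
          (2*pi*\<i> * of_real q) * exp (2*pi*\<i> * of_real (p + q*t0))) (at t0)"
    by (rule field_vector_diff_chain_at[OF inner]) (rule DERIV_exp)
  thus ?thesis unfolding e_def by (simp add: o_def)
qed

lemma Dop_formula:
  assumes y: "Im \<tau> > 0" and dg: "(g has_real_derivative g') (at (Im \<tau>))"
    and F: "\<And>w. Im w > 0 \<Longrightarrow> F w = e (- Re w / 24) * of_real (g (Im w))"
  shows "Dop F \<tau> = e (- Re \<tau> / 24) * of_real (- g (Im \<tau>) / 48 - g' / (4*pi))"
proof -
  have Fx: "(\<lambda>t. F (\<tau> + of_real t)) = (\<lambda>t. e (- Re \<tau> / 24 + (-1/24) * t) * of_real (g (Im \<tau>)))"
  proof
    fix t :: real
    have im: "Im (\<tau> + of_real t) = Im \<tau>" by simp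
    have h1: "F (\<tau> + of_real t) = e (- Re (\<tau> + of_real t) / 24) * of_real (g (Im \<tau>))"
      using F[of "\<tau> + of_real t"] y by (simp only: im)
    have eq: "- Re (\<tau> + of_real t) / 24 = - Re \<tau> / 24 + (-1/24) * t" by simp
    show "F (\<tau> + of_real t) = e (- Re \<tau> / 24 + (-1/24) * t) * of_real (g (Im \<tau>))"
      using h1 unfolding eq .
  qed
  have "((\<lambda>t. e (- Re \<tau> / 24 + (-1/24) * t) * of_real (g (Im \<tau>))) has_vector_derivative
        ((2*pi*\<i> * of_real (-1/24)) * e (- Re \<tau> / 24 + (-1/24) * 0)) * of_real (g (Im \<tau>))) (at 0)"
    by (rule has_vector_derivative_mult_left, rule e_vd)
  hence dx: "dx F \<tau> = (2*pi*\<i> * of_real (-1/24)) * e (- Re \<tau> / 24) * of_real (g (Im \<tau>))"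
    unfolding dx_def Fx by (simp add: vector_derivative_at)
  have dg0: "((\<lambda>t. g (Im \<tau> + t)) has_real_derivative g') (at 0)"
  proof -
    have l: "((\<lambda>t. Im \<tau> + t) has_real_derivative 1) (at 0)" by (auto intro!: derivative_eq_intros)
    have dg': "(g has_real_derivative g') (at ((\<lambda>t. Im \<tau> + t) 0))" using dg by simp
    show ?thesis using DERIV_chain2[OF dg' l] by simp
  qed
  have "((\<lambda>t. e (- Re \<tau> / 24) * of_real (g (Im \<tau> + t))) has_vector_derivative
          e (- Re \<tau> / 24) * of_real g') (at 0)"
    by (rule has_vector_derivative_mult_right, rule has_vector_derivative_of_real, rule dg0)
  hence "((\<lambda>t. F (\<tau> + \<i> * of_real t)) has_vector_derivative e (- Re \<tau> / 24) * of_real g') (at 0)"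
  proof (rule has_vector_derivative_transform_within_open[where S = "{t. t > - Im \<tau>}"])
    show "open {t::real. t > - Im \<tau>}" by (simp add: open_greaterThan[unfolded greaterThan_def])
    show "0 \<in> {t::real. t > - Im \<tau>}" using y by simp
    fix t :: real assume "t \<in> {t. t > - Im \<tau>}"
    hence "Im (\<tau> + \<i> * of_real t) > 0" by simp
    thus "e (- Re \<tau> / 24) * of_real (g (Im \<tau> + t)) = F (\<tau> + \<i> * of_real t)"
      using F by simp
  qed
  hence dy: "dy F \<tau> = e (- Re \<tau> / 24) * of_real g'"
    unfolding dy_def by (simp add: vector_derivative_at)
  show ?thesis unfolding Dop_def dx dy
    by (simp add: field_simps)
qed


lemma nz_r: "3/2 - real r + real k \<noteq> 0"
proof
  assume "3/2 - real r + real k = 0"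
  hence "real (3 + 2*k) = real (2*r)" by simp
  hence "3 + 2*k = 2*r" by (simp only: of_nat_eq_iff)
  thus False by presburger
qed

lemma kummer1: "kummerM 1 b z = Kf b z"
  unfolding kummerM_def Kf_def cK_def by (simp add: pochhammer_fact[symmetric] field_simps)

lemma whit:
  assumes "Y > 0"
  shows "Y powr (1/4 - real r/2) * whittakerM (1/4 - real r/2) (3/4 - real r/2) Y = hh (3/2 - real r) Y"
proof -
  have a1: "3/4 - real r/2 - (1/4 - real r/2) + 1/2 = 1" by simp
  have a2: "1 + 2 * (3/4 - real r/2) = 3/2 - real r + 1" by simp
  have a3: "Y powr (1/4 - real r/2) * Y powr (3/4 - real r/2 + 1/2) = Y powr (3/2 - real r)"
  proof -
    have "(1/4 - real r/2) + (3/4 - real r/2 + 1/2) = 3/2 - real r" by simp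
    thus ?thesis by (simp only: powr_add[symmetric])
  qed
  show ?thesis unfolding whittakerM_def a1 a2 kummer1 hh_def a3[symmetric] by (simp only: mult_ac)
qed

definition cc :: "nat \<Rightarrow> real" where
  "cc r = 1 / 24 ^ r * pochhammer (- 3/2) r"

lemma main_ind:
  "\<forall>\<tau>. Im \<tau> > 0 \<longrightarrow> (Dop ^^ r) delta \<tau> =
     of_real (cc r) * e (- Re \<tau> / 24) * of_real (hh (3/2 - real r) (pi * Im \<tau> / 6))"
proof (induction r)
  case 0
  show ?case
  proof (intro allI impI)
    fix \<tau> :: complex assume y: "Im \<tau> > 0"
    hence Y: "pi * Im \<tau> / 6 > 0" by simp
    show "(Dop ^^ 0) delta \<tau> = of_real (cc 0) * e (- Re \<tau> / 24) * of_real (hh (3/2 - real 0) (pi * Im \<tau> / 6))"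
    proof -
      have w: "(pi * Im \<tau> / 6) powr (1/4) * whittakerM (1/4) (3/4) (pi * Im \<tau> / 6)
           = hh (3/2 - real 0) (pi * Im \<tau> / 6)"
        using whit[OF Y, of 0] by (simp only: of_nat_0 diff_zero div_0)
      have c: "cc 0 = 1" by (simp add: cc_def)
      show ?thesis unfolding funpow_0 delta_def w c by simp
    qed
  qed
next
  case (Suc r)
  show ?case
  proof (intro allI impI)
    fix \<tau> :: complex assume y: "Im \<tau> > 0"
    define a where "a = 3/2 - real r"
    define Y where "Y = pi * Im \<tau> / 6"
    have Y0: "Y > 0" using y by (simp add: Y_def)
    define g where "g = (\<lambda>y. cc r * hh a (pi * y / 6))"
    have F: "\<And>w. Im w > 0 \<Longrightarrow> (Dop ^^ r) delta w = e (- Re w / 24) * of_real (g (Im w))"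
      using Suc.IH by (simp add: g_def a_def)
    have dh: "(hh a has_real_derivative (a * hh (a-1) Y - hh a Y / 2)) (at (pi * Im \<tau> / 6))"
      using hh_deriv[OF _ Y0, of a] nz_r by (simp add: a_def Y_def)
    have l: "((\<lambda>y. pi * y / 6) has_real_derivative pi / 6) (at (Im \<tau>))"
      by (auto intro!: derivative_eq_intros)
    have dg: "(g has_real_derivative cc r * ((a * hh (a-1) Y - hh a Y / 2) * (pi / 6))) (at (Im \<tau>))"
      unfolding g_def by (rule DERIV_cmult, rule DERIV_chain2[OF dh l])
    have "(Dop ^^ Suc r) delta \<tau> = Dop ((Dop ^^ r) delta) \<tau>" by simp
    also have "\<dots> = e (- Re \<tau> / 24) *
        of_real (- g (Im \<tau>) / 48 - cc r * ((a * hh (a-1) Y - hh a Y / 2) * (pi / 6)) / (4*pi))"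
      by (rule Dop_formula[OF y dg F])
    also have "- g (Im \<tau>) / 48 - cc r * ((a * hh (a-1) Y - hh a Y / 2) * (pi / 6)) / (4*pi)
        = cc (Suc r) * hh (3/2 - real (Suc r)) Y"
    proof -
      have "a - 1 = 3/2 - real (Suc r)" by (simp add: a_def)
      hence e1: "hh (3/2 - real (Suc r)) Y = hh (a-1) Y" by simp
      have c1: "cc (Suc r) = cc r * (- a / 24)"
        unfolding cc_def a_def by (simp add: pochhammer_rec' field_simps)
      show ?thesis unfolding g_def Y_def[symmetric] e1 c1 by (simp add: field_simps)
    qed
    finally have fin: "(Dop ^^ Suc r) delta \<tau> =
       e (- Re \<tau> / 24) * of_real (cc (Suc r) * hh (3/2 - real (Suc r)) Y)" .
    show "(Dop ^^ Suc r) delta \<tau> =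
       of_real (cc (Suc r)) * e (- Re \<tau> / 24) * of_real (hh (3/2 - real (Suc r)) (pi * Im \<tau> / 6))"
      unfolding fin Y_def[symmetric] of_real_mult by (simp only: mult_ac)
  qed
qed

theorem mainTheorem9:
  fixes r :: nat and \<tau> :: complex
  assumes "Im \<tau> > 0"
  shows "(Dop ^^ r) delta \<tau> =
    of_real (1 / 24 ^ r * pochhammer (- 3/2) r) * e (- Re \<tau> / 24) *
    of_real ((pi * Im \<tau> / 6) powr (1/4 - real r / 2) *
             whittakerM (1/4 - real r / 2) (3/4 - real r / 2) (pi * Im \<tau> / 6))"
proof -
  have Y: "pi * Im \<tau> / 6 > 0" using assms by simp
  have m: "(Dop ^^ r) delta \<tau> = of_real (cc r) * e (- Re \<tau> / 24) * of_real (hh (3/2 - real r) (pi * Im \<tau> / 6))"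
    using main_ind[of r] assms by blast
  show ?thesis unfolding whit[OF Y] cc_def[symmetric] by (rule m)
qed

end
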